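(* For any valid scheme (satisfying (C1)–(C8)) with $N\ge1$, $K\ge2$, and any $k\in\{2,\dots,K\}$, letting $\mathcal{R}_U'$ be the user-side common randomness provided by the user privacy constraint (C6) for the message indices $k-1$ and $k$, \[ I\big(W_{k:K};Q_{1:N}^{[k-1,\mathcal{R}_U]},A_{1:N}^{[k-1,\mathcal{R}_U]},\mathcal{R}_S\,\big|\,W_{1:k-1}\big)\ \ge\ \frac1N\, I\big(W_{k+1:K};Q_{1:N}^{[k,\mathcal{R}_U']},A_{1:N}^{[k,\mathcal{R}_U']},\mathcal{R}_S\,\big|\,W_{1:k}\big)+\frac{L}{N}, \] where $W_{K+1:K}$ is empty (so the mutual information term is $0$ when $k=K$).
   Context: Model (SPIR with user-side common randomness). There are $N\ge1$ non-colluding databases, each storing the same $K\ge2$ messages $W_1,\dots,W_K$. Each message consists of $L$ i.i.d. symbols uniform over a sufficiently large finite field $\mathbb{F}_q$; entropies are in $q$-ary units, so $H(W_k)=L$ and $H(W_{1:K})=KL$. The databases share server-side common randomness $\mathcal{R}_S$, unknown to the user. The user holds user-side common randomness $\mathcal{R}_U$, a subset of the components of $\mathcal{R}_S$, unknown to the databases except for its size (uniform over subsets of given cardinality). $\mathcal{F}$ is the user's retrieval-strategy randomness. To retrieve $W_k$ the user sends $Q_n^{[k,\mathcal{R}_U]}$ to database $n$, receiving $A_n^{[k,\mathcal{R}_U]}$; $W_{\bar k}=\{W_j:j\ne k\}$. A valid scheme satisfies for all $k,n,\mathcal{R}_U$: (C1) $I(W_{1:K};k,\mathcal{F},\mathcal{R}_S,\mathcal{R}_U)=0$;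 (C2) $I(Q_{1:N}^{[k,\mathcal{R}_U]};W_{1:K},\mathcal{R}_S\setminus\mathcal{R}_U)=0$; (C3) $H(Q_{1:N}^{[k,\mathcal{R}_U]}\mid\mathcal{F})=0$; (C4) $H(A_n^{[k,\mathcal{R}_U]}\mid Q_n^{[k,\mathcal{R}_U]},W_{1:K},\mathcal{R}_S)=0$; (C5) $H(W_k\mid\mathcal{F},A_{1:N}^{[k,\mathcal{R}_U]},\mathcal{R}_U)=0$; (C6) user privacy: for all $k,k',n,\mathcal{R}_U$ there is $\mathcal{R}_U'$ with $H(\mathcal{R}_U')=H(\mathcal{R}_U)$ and $(Q_n^{[k,\mathcal{R}_U]},A_n^{[k,\mathcal{R}_U]},W_{1:K},\mathcal{R}_S)\sim(Q_n^{[k',\mathcal{R}_U']},A_n^{[k',\mathcal{R}_U']},W_{1:K},\mathcal{R}_S)$; (C7) $I(W_{\bar k};\mathcal{F},A_{1:N}^{[k,\mathcal{R}_U]},\mathcal{R}_U)=0$; (C8) $I(\mathcal{R}_S\setminus\mathcal{R}_U;\mathcal{F},A_{1:N}^{[k,\mathcal{R}_U]},W_k,\mathcal{R}_U)=0$. *)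

theory Defs
  imports "HOL-Probability.Probability"
begin

text \<open>These are literally the library notions
  (the locale abbreviations written out outside the locale).\<close>

definition ent :: "'a measure \<Rightarrow> real \<Rightarrow> ('a \<Rightarrow> 'x) \<Rightarrow> real" where
  "ent M b X = prob_space.entropy M b (count_space (X ` space M)) X"

definition cent :: "'a measure \<Rightarrow> real \<Rightarrow> ('a \<Rightarrow> 'x) \<Rightarrow> ('a \<Rightarrow> 'y) \<Rightarrow> real" where
  "cent M b X Y = prob_space.conditional_entropy M b
     (count_space (X ` space M)) (count_space (Y ` space M)) X Y"

definition mi :: "'a measure \<Rightarrow> real \<Rightarrow> ('a \<Rightarrow> 'x) \<Rightarrow> ('a \<Rightarrow> 'y) \<Rightarrow> real" where
  "mi M b X Y = prob_space.mutual_information M b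
     (count_space (X ` space M)) (count_space (Y ` space M)) X Y"

definition cmi :: "'a measure \<Rightarrow> real \<Rightarrow> ('a \<Rightarrow> 'x) \<Rightarrow> ('a \<Rightarrow> 'y) \<Rightarrow> ('a \<Rightarrow> 'z) \<Rightarrow> real" where
  "cmi M b X Y Z = prob_space.conditional_mutual_information M b
     (count_space (X ` space M)) (count_space (Y ` space M)) (count_space (Z ` space M)) X Y Z"

definition same_distr :: "'a measure \<Rightarrow> ('a \<Rightarrow> 'x) \<Rightarrow> ('a \<Rightarrow> 'x) \<Rightarrow> bool" where
  "same_distr M X Y \<longleftrightarrow>
     (\<forall>x. measure M {\<omega> \<in> space M. X \<omega> = x} = measure M {\<omega> \<in> space M. Y \<omega> = x})"

text \<open>Messages: W j is the j-th message (a list of L symbols of the field 'f), j = 1..K.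
  Wseg W a c = W_{a:c} (empty list if a > c).\<close>
definition Wseg :: "(nat \<Rightarrow> 'a \<Rightarrow> 'f list) \<Rightarrow> nat \<Rightarrow> nat \<Rightarrow> 'a \<Rightarrow> 'f list list" where
  "Wseg W a c \<omega> = map (\<lambda>j. W j \<omega>) [a..<Suc c]"

definition Wbar :: "(nat \<Rightarrow> 'a \<Rightarrow> 'f list) \<Rightarrow> nat \<Rightarrow> nat \<Rightarrow> 'a \<Rightarrow> 'f list list" where
  "Wbar W K k \<omega> = map (\<lambda>j. W j \<omega>) (filter (\<lambda>j. j \<noteq> k) [1..<Suc K])"

text \<open>Server-side common randomness R_S: a family of components RS c, c in the finite set C.
  The components with indices in a set U (e.g. U itself for R_U, C - U for R_S minus R_U).\<close>
definition Rpart :: "('c \<Rightarrow> 'a \<Rightarrow> 'r) \<Rightarrow> 'c set \<Rightarrow> 'a \<Rightarrow> ('c \<Rightarrow> 'r)" where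
  "Rpart RS U \<omega> = restrict (\<lambda>c. RS c \<omega>) U"

definition allN :: "(nat \<Rightarrow> nat \<Rightarrow> 'c set \<Rightarrow> 'a \<Rightarrow> 'x) \<Rightarrow> nat \<Rightarrow> nat \<Rightarrow> 'c set \<Rightarrow> 'a \<Rightarrow> 'x list" where
  "allN Z N k U \<omega> = map (\<lambda>n. Z n k U \<omega>) [1..<Suc N]"

definition adm :: "'c set \<Rightarrow> nat \<Rightarrow> 'c set set" where
  "adm C m = {U. U \<subseteq> C \<and> card U = m}"

text \<open>Q n k U, A n k U are the query to / answer of
  database n when retrieving W_k with user-side randomness R_U given by the components in U;
  F is the retrieval-strategy randomness.\<close>
definition valid_scheme ::
  "'a measure \<Rightarrow> nat \<Rightarrow> nat \<Rightarrow> nat \<Rightarrow> 'c set \<Rightarrow> nat \<Rightarrow>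
   (nat \<Rightarrow> 'a \<Rightarrow> 'f::{field,finite} list) \<Rightarrow> ('c \<Rightarrow> 'a \<Rightarrow> 'r) \<Rightarrow> ('a \<Rightarrow> 'g) \<Rightarrow>
   (nat \<Rightarrow> nat \<Rightarrow> 'c set \<Rightarrow> 'a \<Rightarrow> 'q) \<Rightarrow> (nat \<Rightarrow> nat \<Rightarrow> 'c set \<Rightarrow> 'a \<Rightarrow> 'ans) \<Rightarrow> bool" where
  "valid_scheme M N K L C m W RS F Q A \<longleftrightarrow>
   (let b = real CARD('f) in
    prob_space M \<and> finite C \<and> m \<le> card C \<and>
    \<comment> \<open>all random variables are discrete (finite-valued)\<close>
    (\<forall>j. simple_function M (W j)) \<and> (\<forall>c. simple_function M (RS c)) \<and> simple_function M F \<and>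
    (\<forall>n k U. simple_function M (Q n k U)) \<and> (\<forall>n k U. simple_function M (A n k U)) \<and>
    \<comment> \<open>messages: K*L i.i.d. uniform symbols over the field\<close>
    (\<forall>ws. length ws = K \<and> (\<forall>w\<in>set ws. length w = L) \<longrightarrow>
        measure M {\<omega> \<in> space M. Wseg W 1 K \<omega> = ws} = 1 / b ^ (K * L)) \<and>
    (\<forall>k\<in>{1..K}. \<forall>U\<in>adm C m.
       \<comment> \<open>(C1)\<close>
       mi M b (Wseg W 1 K) (\<lambda>\<omega>. (F \<omega>, Rpart RS C \<omega>, Rpart RS U \<omega>)) = 0 \<and>
       \<comment> \<open>(C2)\<close>
       mi M b (allN Q N k U) (\<lambda>\<omega>. (Wseg W 1 K \<omega>, Rpart RS (C - U) \<omega>)) = 0 \<and>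
       \<comment> \<open>(C3)\<close>
       cent M b (allN Q N k U) F = 0 \<and>
       \<comment> \<open>(C4)\<close>
       (\<forall>n\<in>{1..N}. cent M b (A n k U) (\<lambda>\<omega>. (Q n k U \<omega>, Wseg W 1 K \<omega>, Rpart RS C \<omega>)) = 0) \<and>
       \<comment> \<open>(C5)\<close>
       cent M b (W k) (\<lambda>\<omega>. (F \<omega>, allN A N k U \<omega>, Rpart RS U \<omega>)) = 0 \<and>
       \<comment> \<open>(C6)\<close>
       (\<forall>k'\<in>{1..K}. \<forall>n\<in>{1..N}. \<exists>U'\<in>adm C m.
          ent M b (Rpart RS U') = ent M b (Rpart RS U) \<and>
          same_distr M (\<lambda>\<omega>. (Q n k U \<omega>, A n k U \<omega>, Wseg W 1 K \<omega>, Rpart RS C \<omega>))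
                       (\<lambda>\<omega>. (Q n k' U' \<omega>, A n k' U' \<omega>, Wseg W 1 K \<omega>, Rpart RS C \<omega>))) \<and>
       \<comment> \<open>(C7)\<close>
       mi M b (Wbar W K k) (\<lambda>\<omega>. (F \<omega>, allN A N k U \<omega>, Rpart RS U \<omega>)) = 0 \<and>
       \<comment> \<open>(C8)\<close>
       mi M b (Rpart RS (C - U)) (\<lambda>\<omega>. (F \<omega>, allN A N k U \<omega>, W k \<omega>, Rpart RS U \<omega>)) = 0))"

end

theory Submission
  imports Defs
begin


definition detm :: "'a measure \<Rightarrow> ('a \<Rightarrow> 'x) \<Rightarrow> ('a \<Rightarrow> 'y) \<Rightarrow> bool" where
  "detm M X Y \<longleftrightarrow> (\<forall>\<omega>\<in>space M. \<forall>\<omega>'\<in>space M. X \<omega> = X \<omega>' \<longrightarrow> Y \<omega> = Y \<omega>')"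

lemma det_fun:
  assumes "detm M X Y" shows "\<exists>f. \<forall>\<omega>\<in>space M. Y \<omega> = f (X \<omega>)"
proof -
  define f where "f v = Y (SOME \<omega>. \<omega> \<in> space M \<and> X \<omega> = v)" for v
  have "\<forall>\<omega>\<in>space M. Y \<omega> = f (X \<omega>)"
  proof
    fix \<omega> assume w: "\<omega> \<in> space M"
    then have "\<exists>\<omega>'. \<omega>' \<in> space M \<and> X \<omega>' = X \<omega>" by blast
    then have "(SOME \<omega>'. \<omega>' \<in> space M \<and> X \<omega>' = X \<omega>) \<in> space M \<and> X (SOME \<omega>'. \<omega>' \<in> space M \<and> X \<omega>' = X \<omega>) = X \<omega>"
      by (rule someI_ex)
    then show "Y \<omega> = f (X \<omega>)" using assms w unfolding detm_def f_def by metis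
  qed
  then show ?thesis by blast
qed

lemma simple_det:
  assumes "simple_function M X" "detm M X Y" shows "simple_function M Y"
proof -
  obtain f where f: "\<forall>\<omega>\<in>space M. Y \<omega> = f (X \<omega>)" using det_fun[OF assms(2)] by blast
  have "simple_function M (f \<circ> X)" using assms(1) by simp
  then show ?thesis using f by (subst simple_function_cong[where g="f \<circ> X"]) auto
qed


definition Sg :: "nat \<Rightarrow> nat \<Rightarrow> 'f list list set" where
  "Sg L j = {ws. length ws = j \<and> (\<forall>w\<in>set ws. length w = L)}"

lemma Sg_eq: "Sg L j = {ws. set ws \<subseteq> {w. length w = L} \<and> length ws = j}"
  unfolding Sg_def by auto

lemma card_words: "card {w :: 'f::finite list. length w = L} = CARD('f) ^ L"
  using card_lists_length_eq[of "UNIV :: 'f set" L] by simp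

lemma finite_words: "finite {w :: 'f::finite list. length w = L}"
  using finite_lists_length_eq[of "UNIV :: 'f set" L] by simp

lemma finite_Sg: "finite (Sg L j :: 'f::finite list list set)"
  unfolding Sg_eq by (rule finite_lists_length_eq[OF finite_words])

lemma card_Sg: "card (Sg L j :: 'f::finite list list set) = CARD('f) ^ (L * j)"
  unfolding Sg_eq card_lists_length_eq[OF finite_words] card_words by (simp add: power_mult)


lemma simple_Rpart:
  assumes fin: "finite U" and RS: "\<And>c. simple_function M (RS c)"
  shows "simple_function M (Rpart RS U)"
  using fin
proof (induction U rule: finite_induct)
  case empty
  have "Rpart RS {} = (\<lambda>\<omega>. (\<lambda>_. undefined))" by (simp add: Rpart_def restrict_def fun_eq_iff)
  then show ?case by simp
next
  case (insert c U)
  have eq: "Rpart RS (insert c U) = (\<lambda>(r, g). g(c := r)) \<circ> (\<lambda>\<omega>. (RS c \<omega>, Rpart RS U \<omega>))"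
    by (auto simp: Rpart_def restrict_def fun_eq_iff)
  show ?case unfolding eq using RS insert by (intro simple_function_compose simple_function_Pair) auto
qed

lemma upt_split3:
  assumes "1 \<le> k" "k \<le> K"
  shows "[1..<Suc K] = [1..<k] @ k # [Suc k..<Suc K]"
proof -
  have "[1..<Suc K] = [1..<k] @ [k..<Suc K]" using assms upt_add_eq_append[of 1 k "Suc K - k"] by simp
  also have "[k..<Suc K] = k # [Suc k..<Suc K]" using assms by (simp add: upt_conv_Cons)
  finally show ?thesis .
qed

lemma simple_map:
  assumes A: "\<And>n. simple_function M (A n)"
  shows "simple_function M (\<lambda>\<omega>. map (\<lambda>n. A n \<omega>) xs)"
proof (induction xs)
  case Nil then show ?case by simp
next
  case (Cons a xs)
  have "simple_function M ((\<lambda>(x, y). x # y) \<circ> (\<lambda>\<omega>. (A a \<omega>, map (\<lambda>n. A n \<omega>) xs)))"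
    using A Cons by (intro simple_function_compose simple_function_Pair) auto
  then show ?case by (simp add: comp_def)
qed

context information_space begin

lemma ent_cong:
  assumes "\<And>x. x \<in> space M \<Longrightarrow> X x = Y x" shows "ent M b X = ent M b Y"
proof -
  have i: "X ` space M = Y ` space M" using assms by (auto intro: image_cong)
  have "distr M (count_space (X ` space M)) X = distr M (count_space (Y ` space M)) Y"
    unfolding i by (rule distr_cong) (auto simp: assms)
  then show ?thesis unfolding ent_def entropy_def i by simp
qed

lemma ent_mono:
  assumes X: "simple_function M X" and d: "detm M X Y" shows "ent M b Y \<le> ent M b X"
proof -
  obtain f where f: "\<forall>\<omega>\<in>space M. Y \<omega> = f (X \<omega>)" using det_fun[OF d] by blast
  have "ent M b Y = ent M b (f \<circ> X)" using f by (intro ent_cong) auto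
  also have "\<dots> \<le> ent M b X" unfolding ent_def using entropy_data_processing[OF X] by simp
  finally show ?thesis .
qed

lemma ent_eq:
  assumes "simple_function M X" "simple_function M Y" "detm M X Y" "detm M Y X"
  shows "ent M b X = ent M b Y"
  using ent_mono[OF assms(1,3)] ent_mono[OF assms(2,4)] by simp

lemma ent_swap:
  assumes "simple_function M X" "simple_function M Y"
  shows "ent M b (\<lambda>\<omega>. (X \<omega>, Y \<omega>)) = ent M b (\<lambda>\<omega>. (Y \<omega>, X \<omega>))"
  by (rule ent_eq) (use assms in \<open>auto simp: detm_def\<close>)

lemma cent_eq:
  assumes X: "simple_function M X" and Y: "simple_function M Y"
  shows "cent M b X Y = ent M b (\<lambda>\<omega>. (X \<omega>, Y \<omega>)) - ent M b Y"
  using entropy_chain_rule[OF Y X] ent_swap[OF X Y] unfolding cent_def ent_def by simp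

lemma mi_eq:
  assumes X: "simple_function M X" and Y: "simple_function M Y"
  shows "mi M b X Y = ent M b X + ent M b Y - ent M b (\<lambda>\<omega>. (X \<omega>, Y \<omega>))"
  using mutual_information_eq_entropy_conditional_entropy[OF X Y] cent_eq[OF X Y]
  unfolding mi_def cent_def ent_def by simp

lemma ent_sum:
  assumes V: "simple_function M V"
  shows "ent M b V = - (\<Sum>v\<in>V`space M. prob (V -` {v} \<inter> space M) * log b (prob (V -` {v} \<inter> space M)))"
  unfolding ent_def
  by (rule entropy_simple_distributed[OF simple_distributedI[OF V measure_nonneg refl]])

lemma marg:
  assumes V: "simple_function M V"
  shows "(\<Sum>v\<in>V`space M. prob (V -` {v} \<inter> space M) * g (f v)) =
         (\<Sum>u\<in>(\<lambda>\<omega>. f (V \<omega>))`space M. prob ((\<lambda>\<omega>. f (V \<omega>)) -` {u} \<inter> space M) * g u)"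
proof -
  have fin: "finite (V`space M)" using simple_functionD(1)[OF V] .
  have pu: "prob ((\<lambda>\<omega>. f (V \<omega>)) -` {u} \<inter> space M) = (\<Sum>v\<in>{v\<in>V`space M. f v = u}. prob (V -` {v} \<inter> space M))" for u
  proof -
    have "(\<lambda>\<omega>. f (V \<omega>)) -` {u} \<inter> space M = (\<Union>v\<in>{v\<in>V`space M. f v = u}. V -` {v} \<inter> space M)"
      by auto
    also have "prob \<dots> = (\<Sum>v\<in>{v\<in>V`space M. f v = u}. prob (V -` {v} \<inter> space M))"
      by (rule measure_finite_Union) (use fin simple_functionD(2)[OF V] in \<open>auto simp: disjoint_family_on_def\<close>)
    finally show ?thesis .
  qed
  have "(\<Sum>u\<in>(\<lambda>\<omega>. f (V \<omega>))`space M. prob ((\<lambda>\<omega>. f (V \<omega>)) -` {u} \<inter> space M) * g u)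
     = (\<Sum>u\<in>(\<lambda>\<omega>. f (V \<omega>))`space M. (\<Sum>v\<in>{v\<in>V`space M. f v = u}. prob (V -` {v} \<inter> space M) * g (f v)))"
    by (auto simp: pu sum_distrib_right intro!: sum.cong)
  also have "\<dots> = (\<Sum>v\<in>V`space M. prob (V -` {v} \<inter> space M) * g (f v))"
  proof (rule sum.group)
    have "(\<lambda>\<omega>. f (V \<omega>))`space M = f`(V`space M)" by auto
    then show "finite ((\<lambda>\<omega>. f (V \<omega>))`space M)" using fin by simp
  qed (use fin in auto)
  finally show ?thesis by simp
qed

lemma prob_pos_mono:
  assumes V: "simple_function M V" and W: "simple_function M W"
    and sub: "V -` {v} \<inter> space M \<subseteq> W -` {w} \<inter> space M"
  shows "prob (V -` {v} \<inter> space M) \<le> prob (W -` {w} \<inter> space M)"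
  by (rule finite_measure_mono[OF sub simple_functionD(2)[OF W]])

lemma cmi_eq:
  assumes X: "simple_function M X" and Y: "simple_function M Y" and Z: "simple_function M Z"
  shows "cmi M b X Y Z = ent M b (\<lambda>\<omega>. (X \<omega>, Z \<omega>)) + ent M b (\<lambda>\<omega>. (Y \<omega>, Z \<omega>))
           - ent M b (\<lambda>\<omega>. (X \<omega>, Y \<omega>, Z \<omega>)) - ent M b Z"
proof -
  define XYZ where "XYZ = (\<lambda>\<omega>. (X \<omega>, Y \<omega>, Z \<omega>))"
  define XZ where "XZ = (\<lambda>\<omega>. (X \<omega>, Z \<omega>))"
  define YZ where "YZ = (\<lambda>\<omega>. (Y \<omega>, Z \<omega>))"
  have sXYZ: "simple_function M XYZ" unfolding XYZ_def using X Y Z by simp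
  have sXZ: "simple_function M XZ" unfolding XZ_def using X Z by simp
  have sYZ: "simple_function M YZ" unfolding YZ_def using Y Z by simp
  define p where "p t = prob (XYZ -` {t} \<inter> space M)" for t
  define pxz where "pxz t = prob (XZ -` {t} \<inter> space M)" for t
  define pyz where "pyz t = prob (YZ -` {t} \<inter> space M)" for t
  define pz where "pz t = prob (Z -` {t} \<inter> space M)" for t
  note sd = simple_distributedI[OF _ measure_nonneg refl]
  have "cmi M b X Y Z = (\<Sum>(x, y, z)\<in>XYZ`space M. p (x, y, z) * log b (p (x, y, z) / (pxz (x, z) * (pyz (y,z) / pz z))))"
    unfolding cmi_def XYZ_def p_def pxz_def pyz_def pz_def XZ_def YZ_def
    by (rule conditional_mutual_information_eq[OF sd[OF Z] sd[OF simple_function_Pair[OF Y Z]]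
          sd[OF simple_function_Pair[OF X Z]] sd[OF simple_function_Pair[OF X simple_function_Pair[OF Y Z]]]])
  also have "\<dots> = (\<Sum>t\<in>XYZ`space M. p t * log b (p t) - p t * log b (pxz ((\<lambda>(x,y,z). (x,z)) t))
        - p t * log b (pyz ((\<lambda>(x,y,z). (y,z)) t)) + p t * log b (pz ((\<lambda>(x,y,z). z) t)))"
  proof (rule sum.cong[OF refl])
    fix t assume "t \<in> XYZ`space M"
    obtain x y z where t: "t = (x,y,z)" by (cases t) auto
    have p0: "0 \<le> p t" unfolding p_def by simp
    show "(case t of (x, y, z) \<Rightarrow> p (x, y, z) * log b (p (x, y, z) / (pxz (x, z) * (pyz (y, z) / pz z)))) =
      p t * log b (p t) - p t * log b (pxz ((\<lambda>(x,y,z). (x,z)) t))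
        - p t * log b (pyz ((\<lambda>(x,y,z). (y,z)) t)) + p t * log b (pz ((\<lambda>(x,y,z). z) t))"
    proof (cases "p t = 0")
      case True then show ?thesis by (simp add: t)
    next
      case False
      then have pp: "0 < p t" using p0 by simp
      have "p t \<le> pxz (x,z)" unfolding p_def pxz_def t
        by (rule prob_pos_mono[OF sXYZ sXZ]) (auto simp: XYZ_def XZ_def)
      moreover have "p t \<le> pyz (y,z)" unfolding p_def pyz_def t
        by (rule prob_pos_mono[OF sXYZ sYZ]) (auto simp: XYZ_def YZ_def)
      moreover have "p t \<le> pz z" unfolding p_def pz_def t
        by (rule prob_pos_mono[OF sXYZ Z]) (auto simp: XYZ_def)
      ultimately have "0 < pxz (x,z)" "0 < pyz (y,z)" "0 < pz z" using pp by auto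
      with pp show ?thesis unfolding t
        by (simp add: log_divide log_mult algebra_simps)
    qed
  qed
  also have "\<dots> = (\<Sum>t\<in>XYZ`space M. p t * log b (p t)) - (\<Sum>t\<in>XYZ`space M. p t * log b (pxz ((\<lambda>(x,y,z). (x,z)) t)))
     - (\<Sum>t\<in>XYZ`space M. p t * log b (pyz ((\<lambda>(x,y,z). (y,z)) t))) + (\<Sum>t\<in>XYZ`space M. p t * log b (pz ((\<lambda>(x,y,z). z) t)))"
    by (simp add: sum.distrib sum_subtractf)
  also have "(\<Sum>t\<in>XYZ`space M. p t * log b (pxz ((\<lambda>(x,y,z). (x,z)) t))) = - ent M b XZ"
  proof -
    have "(\<Sum>t\<in>XYZ`space M. p t * log b (pxz ((\<lambda>(x,y,z). (x,z)) t))) =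
      (\<Sum>u\<in>(\<lambda>\<omega>. (\<lambda>(x,y,z). (x,z)) (XYZ \<omega>))`space M. prob ((\<lambda>\<omega>. (\<lambda>(x,y,z). (x,z)) (XYZ \<omega>)) -` {u} \<inter> space M) * log b (pxz u))"
      unfolding p_def by (rule marg[OF sXYZ])
    also have "(\<lambda>\<omega>. (\<lambda>(x,y,z). (x,z)) (XYZ \<omega>)) = XZ" by (simp add: XYZ_def XZ_def)
    finally show ?thesis using ent_sum[OF sXZ] unfolding pxz_def by simp
  qed
  also have "(\<Sum>t\<in>XYZ`space M. p t * log b (pyz ((\<lambda>(x,y,z). (y,z)) t))) = - ent M b YZ"
  proof -
    have "(\<Sum>t\<in>XYZ`space M. p t * log b (pyz ((\<lambda>(x,y,z). (y,z)) t))) =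
      (\<Sum>u\<in>(\<lambda>\<omega>. (\<lambda>(x,y,z). (y,z)) (XYZ \<omega>))`space M. prob ((\<lambda>\<omega>. (\<lambda>(x,y,z). (y,z)) (XYZ \<omega>)) -` {u} \<inter> space M) * log b (pyz u))"
      unfolding p_def by (rule marg[OF sXYZ])
    also have "(\<lambda>\<omega>. (\<lambda>(x,y,z). (y,z)) (XYZ \<omega>)) = YZ" by (simp add: XYZ_def YZ_def)
    finally show ?thesis using ent_sum[OF sYZ] unfolding pyz_def by simp
  qed
  also have "(\<Sum>t\<in>XYZ`space M. p t * log b (pz ((\<lambda>(x,y,z). z) t))) = - ent M b Z"
  proof -
    have "(\<Sum>t\<in>XYZ`space M. p t * log b (pz ((\<lambda>(x,y,z). z) t))) =
      (\<Sum>u\<in>(\<lambda>\<omega>. (\<lambda>(x,y,z). z) (XYZ \<omega>))`space M. prob ((\<lambda>\<omega>. (\<lambda>(x,y,z). z) (XYZ \<omega>)) -` {u} \<inter> space M) * log b (pz u))"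
      unfolding p_def by (rule marg[OF sXYZ])
    also have "(\<lambda>\<omega>. (\<lambda>(x,y,z). z) (XYZ \<omega>)) = Z" by (simp add: XYZ_def)
    finally show ?thesis using ent_sum[OF Z] unfolding pz_def by simp
  qed
  also have "(\<Sum>t\<in>XYZ`space M. p t * log b (p t)) = - ent M b XYZ"
    using ent_sum[OF sXYZ] unfolding p_def by simp
  finally show ?thesis unfolding XYZ_def XZ_def YZ_def by simp
qed

lemma submod:
  assumes X: "simple_function M X" and Y: "simple_function M Y" and Z: "simple_function M Z"
  shows "ent M b (\<lambda>\<omega>. (X \<omega>, Y \<omega>, Z \<omega>)) + ent M b Z \<le> ent M b (\<lambda>\<omega>. (X \<omega>, Z \<omega>)) + ent M b (\<lambda>\<omega>. (Y \<omega>, Z \<omega>))"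
  using conditional_mutual_information_nonneg[OF X Y Z] cmi_eq[OF X Y Z] unfolding cmi_def by simp

lemma subadd:
  assumes X: "simple_function M X" and Y: "simple_function M Y"
  shows "ent M b (\<lambda>\<omega>. (X \<omega>, Y \<omega>)) \<le> ent M b X + ent M b Y"
  using mutual_information_nonneg_simple[OF X Y] mi_eq[OF X Y] unfolding mi_def by simp

lemma ent_sum_super:
  assumes G: "simple_function M G" and T: "finite T" "G`space M \<subseteq> T"
  shows "ent M b G = - (\<Sum>u\<in>T. prob (G -` {u} \<inter> space M) * log b (prob (G -` {u} \<inter> space M)))"
proof -
  have "(\<Sum>u\<in>G`space M. prob (G -` {u} \<inter> space M) * log b (prob (G -` {u} \<inter> space M))) =
        (\<Sum>u\<in>T. prob (G -` {u} \<inter> space M) * log b (prob (G -` {u} \<inter> space M)))"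
  proof -
    have "\<forall>u\<in>T - G`space M. G -` {u} \<inter> space M = {}" by auto
    then show ?thesis by (intro sum.mono_neutral_left[OF T(1) T(2)]) auto
  qed
  then show ?thesis using ent_sum[OF G] by simp
qed

lemma prob_fiber:
  assumes V: "simple_function M V" and S: "finite S" "V`space M \<subseteq> S"
  shows "prob ((\<lambda>\<omega>. f (V \<omega>)) -` {u} \<inter> space M) = (\<Sum>v\<in>{v\<in>S. f v = u}. prob (V -` {v} \<inter> space M))"
proof -
  have "(\<lambda>\<omega>. f (V \<omega>)) -` {u} \<inter> space M = (\<Union>v\<in>{v\<in>S. f v = u}. V -` {v} \<inter> space M)"
    using S(2) by auto
  also have "prob \<dots> = (\<Sum>v\<in>{v\<in>S. f v = u}. prob (V -` {v} \<inter> space M))"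
    by (rule measure_finite_Union) (use S simple_functionD(2)[OF V] in \<open>auto simp: disjoint_family_on_def\<close>)
  finally show ?thesis .
qed

lemma ent_same_distr:
  assumes V: "simple_function M V" and V': "simple_function M V'" and sd: "same_distr M V V'"
    and X: "\<And>\<omega>. \<omega> \<in> space M \<Longrightarrow> X \<omega> = f (V \<omega>)"
    and X': "\<And>\<omega>. \<omega> \<in> space M \<Longrightarrow> X' \<omega> = f (V' \<omega>)"
  shows "ent M b X = ent M b X'"
proof -
  define S where "S = V`space M \<union> V'`space M"
  have fS: "finite S" unfolding S_def using simple_functionD(1)[OF V] simple_functionD(1)[OF V'] by simp
  define T where "T = f ` S"
  have fT: "finite T" unfolding T_def using fS by simp
  have sfV: "simple_function M (\<lambda>\<omega>. f (V \<omega>))" using simple_function_compose[OF V, of f] by (simp add: comp_def)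
  have sfV': "simple_function M (\<lambda>\<omega>. f (V' \<omega>))" using simple_function_compose[OF V', of f] by (simp add: comp_def)
  have eqv: "prob (V -` {v} \<inter> space M) = prob (V' -` {v} \<inter> space M)" for v
  proof -
    have "V -` {v} \<inter> space M = {\<omega> \<in> space M. V \<omega> = v}" "V' -` {v} \<inter> space M = {\<omega> \<in> space M. V' \<omega> = v}" by auto
    then show ?thesis using sd unfolding same_distr_def by simp
  qed
  have eqf: "prob ((\<lambda>\<omega>. f (V \<omega>)) -` {u} \<inter> space M) = prob ((\<lambda>\<omega>. f (V' \<omega>)) -` {u} \<inter> space M)" for u
    using prob_fiber[OF V fS, of f u] prob_fiber[OF V' fS, of f u] eqv unfolding S_def by auto
  have "ent M b X = ent M b (\<lambda>\<omega>. f (V \<omega>))" using X by (intro ent_cong) auto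
  also have "\<dots> = - (\<Sum>u\<in>T. prob ((\<lambda>\<omega>. f (V \<omega>)) -` {u} \<inter> space M) * log b (prob ((\<lambda>\<omega>. f (V \<omega>)) -` {u} \<inter> space M)))"
    by (rule ent_sum_super[OF sfV fT]) (auto simp: T_def S_def)
  also have "\<dots> = - (\<Sum>u\<in>T. prob ((\<lambda>\<omega>. f (V' \<omega>)) -` {u} \<inter> space M) * log b (prob ((\<lambda>\<omega>. f (V' \<omega>)) -` {u} \<inter> space M)))"
    using eqf by simp
  also have "\<dots> = ent M b (\<lambda>\<omega>. f (V' \<omega>))"
    by (rule ent_sum_super[OF sfV' fT, symmetric]) (auto simp: T_def S_def)
  also have "\<dots> = ent M b X'" using X' by (intro ent_cong) auto
  finally show ?thesis .
qed

lemma subadd_list: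
  assumes Z: "simple_function M Z" and A: "\<And>n. simple_function M (A n)"
  shows "ent M b (\<lambda>\<omega>. (map (\<lambda>n. A n \<omega>) [1..<Suc N], Z \<omega>)) - ent M b Z
     \<le> (\<Sum>n\<in>{1..N}. ent M b (\<lambda>\<omega>. (A n \<omega>, Z \<omega>)) - ent M b Z)"
proof (induction N)
  case 0
  have "ent M b (\<lambda>\<omega>. (map (\<lambda>n. A n \<omega>) [1..<Suc 0], Z \<omega>)) = ent M b Z"
    by (rule ent_eq) (use Z in \<open>auto simp: detm_def\<close>)
  then show ?case by simp
next
  case (Suc N)
  have sL: "simple_function M (\<lambda>\<omega>. map (\<lambda>n. A n \<omega>) [1..<Suc N])"
    by (rule simple_map[OF A])
  have sL2: "simple_function M (\<lambda>\<omega>. map (\<lambda>n. A n \<omega>) [1..<Suc (Suc N)])"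
    by (rule simple_map[OF A])
  have e: "ent M b (\<lambda>\<omega>. (map (\<lambda>n. A n \<omega>) [1..<Suc (Suc N)], Z \<omega>)) =
           ent M b (\<lambda>\<omega>. (map (\<lambda>n. A n \<omega>) [1..<Suc N], A (Suc N) \<omega>, Z \<omega>))"
    by (rule ent_eq) (use Z A sL sL2 in \<open>auto simp: detm_def\<close>)
  have "ent M b (\<lambda>\<omega>. (map (\<lambda>n. A n \<omega>) [1..<Suc N], A (Suc N) \<omega>, Z \<omega>)) + ent M b Z \<le>
        ent M b (\<lambda>\<omega>. (map (\<lambda>n. A n \<omega>) [1..<Suc N], Z \<omega>)) + ent M b (\<lambda>\<omega>. (A (Suc N) \<omega>, Z \<omega>))"
    by (rule submod[OF sL A Z])
  then show ?case using Suc e by simp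
qed

lemma unif_null:
  fixes Wl :: "'a \<Rightarrow> 'f::finite list list"
  assumes Wl: "simple_function M Wl" and hb: "b = real CARD('f)"
    and hu: "\<forall>ws\<in>Sg L K. measure M {\<omega> \<in> space M. Wl \<omega> = ws} = 1 / b ^ (K * L)"
  shows "prob (Wl -` (- Sg L K) \<inter> space M) = 0"
proof -
  have bpos: "b > 0" using b_gt_1 by simp
  have "prob (Wl -` Sg L K \<inter> space M) = prob (\<Union>ws\<in>Sg L K. Wl -` {ws} \<inter> space M)"
    by (rule arg_cong[where f=prob]) auto
  also have "\<dots> = (\<Sum>ws\<in>Sg L K. prob (Wl -` {ws} \<inter> space M))"
    by (rule measure_finite_Union) (use finite_Sg simple_functionD(2)[OF Wl] in \<open>auto simp: disjoint_family_on_def\<close>)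
  also have "\<dots> = (\<Sum>ws\<in>(Sg L K :: 'f list list set). 1 / b ^ (K * L))"
  proof -
    have pw: "prob (Wl -` {ws} \<inter> space M) = 1 / b ^ (K * L)" if "ws \<in> Sg L K" for ws
    proof -
      have "Wl -` {ws} \<inter> space M = {\<omega> \<in> space M. Wl \<omega> = ws}" by auto
      then show ?thesis using hu that by simp
    qed
    show ?thesis by (rule sum.cong) (auto simp: pw)
  qed
  also have "\<dots> = 1" using bpos by (simp add: card_Sg hb mult.commute)
  finally have p1: "prob (Wl -` Sg L K \<inter> space M) = 1" .
  have "Wl -` (- Sg L K) \<inter> space M = space M - (Wl -` Sg L K \<inter> space M)" by auto
  then show ?thesis using prob_compl[OF simple_functionD(2)[OF Wl]] p1 by simp
qed

lemma ent_le_seg: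
  fixes Wl :: "'a \<Rightarrow> 'f::finite list list"
  assumes Wl: "simple_function M Wl" and hb: "b = real CARD('f)"
    and hu: "\<forall>ws\<in>Sg L K. measure M {\<omega> \<in> space M. Wl \<omega> = ws} = 1 / b ^ (K * L)"
    and V: "simple_function M V" and hV: "\<forall>\<omega>\<in>space M. Wl \<omega> \<in> Sg L K \<longrightarrow> V \<omega> \<in> (Sg L j :: 'f list list set)"
  shows "ent M b V \<le> real j * real L"
proof -
  have bpos: "b > 0" using b_gt_1 by simp
  define pv where "pv x = prob (V -` {x} \<inter> space M)" for x
  have "ent M b V \<le> log b (card (V ` space M \<inter> {x. pv x \<noteq> 0}))"
    unfolding ent_def pv_def by (rule entropy_le_card_not_0[OF simple_distributedI[OF V measure_nonneg refl]])
  moreover have sub: "V ` space M \<inter> {x. pv x \<noteq> 0} \<subseteq> Sg L j"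
  proof
    fix x assume x: "x \<in> V ` space M \<inter> {x. pv x \<noteq> 0}"
    show "x \<in> Sg L j"
    proof (rule ccontr)
      assume "x \<notin> Sg L j"
      then have "V -` {x} \<inter> space M \<subseteq> Wl -` (- Sg L K) \<inter> space M" using hV by auto
      then have "pv x \<le> prob (Wl -` (- Sg L K) \<inter> space M)" unfolding pv_def
        by (rule finite_measure_mono[OF _ simple_functionD(2)[OF Wl]])
      then have "pv x \<le> 0" using unif_null[OF Wl hb hu] by simp
      moreover have "pv x \<ge> 0" unfolding pv_def by simp
      ultimately show False using x by simp
    qed
  qed
  moreover have "log b (card (V ` space M \<inter> {x. pv x \<noteq> 0})) \<le> real j * real L"
  proof (cases "card (V ` space M \<inter> {x. pv x \<noteq> 0}) = 0")
    case True then show ?thesis by (simp add: log_def)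
  next
    case False
    have "card (V ` space M \<inter> {x. pv x \<noteq> 0}) \<le> card (Sg L j :: 'f list list set)"
      by (rule card_mono[OF finite_Sg sub])
    then have "real (card (V ` space M \<inter> {x. pv x \<noteq> 0})) \<le> b ^ (L * j)"
      unfolding card_Sg hb by (metis of_nat_le_iff of_nat_power)
    then have "log b (card (V ` space M \<inter> {x. pv x \<noteq> 0})) \<le> log b (b ^ (L * j))"
      using False b_gt_1 by (intro log_mono) auto
    also have "\<dots> = real j * real L" using bpos b_gt_1 by simp
    finally show ?thesis .
  qed
  ultimately show ?thesis by linarith
qed

lemma ent_Wl:
  fixes Wl :: "'a \<Rightarrow> 'f::finite list list"
  assumes Wl: "simple_function M Wl" and hb: "b = real CARD('f)"
    and hu: "\<forall>ws\<in>Sg L K. measure M {\<omega> \<in> space M. Wl \<omega> = ws} = 1 / b ^ (K * L)"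
  shows "ent M b Wl = real K * real L"
proof -
  have bpos: "b > 0" using b_gt_1 by simp
  define B where "B = b ^ (K * L)"
  have Bpos: "B > 0" unfolding B_def using bpos by simp
  have pS: "prob (Wl -` {v} \<inter> space M) = 1 / B" if "v \<in> Sg L K" for v
  proof -
    have "Wl -` {v} \<inter> space M = {\<omega> \<in> space M. Wl \<omega> = v}" by auto
    then show ?thesis using hu that unfolding B_def by simp
  qed
  have pN: "prob (Wl -` {v} \<inter> space M) = 0" if "v \<notin> Sg L K" for v
  proof -
    have "Wl -` {v} \<inter> space M \<subseteq> Wl -` (- Sg L K) \<inter> space M" using that by auto
    then have "prob (Wl -` {v} \<inter> space M) \<le> prob (Wl -` (- Sg L K) \<inter> space M)"
      by (rule finite_measure_mono[OF _ simple_functionD(2)[OF Wl]])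
    then show ?thesis using unif_null[OF Wl hb hu] measure_nonneg[of M "Wl -` {v} \<inter> space M"] by linarith
  qed
  have SR: "Sg L K \<subseteq> Wl ` space M"
  proof
    fix v :: "'f list list" assume v: "v \<in> Sg L K"
    then have "prob (Wl -` {v} \<inter> space M) \<noteq> 0" using pS Bpos by simp
    then have "Wl -` {v} \<inter> space M \<noteq> {}" by auto
    then show "v \<in> Wl ` space M" by auto
  qed
  have "(\<Sum>v\<in>Wl`space M. prob (Wl -` {v} \<inter> space M) * log b (prob (Wl -` {v} \<inter> space M)))
      = (\<Sum>v\<in>Wl`space M. if v \<in> Sg L K then 1 / B * log b (1 / B) else 0)"
    by (rule sum.cong[OF refl]) (auto simp: pS pN)
  also have "\<dots> = (\<Sum>v\<in>Wl`space M \<inter> Sg L K. 1 / B * log b (1 / B))"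
    by (rule sum.inter_restrict[symmetric]) (use simple_functionD(1)[OF Wl] in simp)
  also have "Wl`space M \<inter> Sg L K = Sg L K" using SR by auto
  also have "(\<Sum>v\<in>(Sg L K :: 'f list list set). 1 / B * log b (1 / B)) = real (card (Sg L K :: 'f list list set)) / B * log b (1 / B)"
    by simp
  also have "real (card (Sg L K :: 'f list list set)) = B" unfolding B_def card_Sg hb by (simp add: mult.commute)
  also have "B / B * log b (1 / B) = - (real K * real L)"
    using Bpos bpos b_gt_1 unfolding B_def by (simp add: log_divide)
  finally show ?thesis using ent_sum[OF Wl] by simp
qed


end


context information_space begin
lemma submod_gen:
  assumes X: "simple_function M X" and Y: "simple_function M Y" and Z: "simple_function M Z"
    and s1: "simple_function M J1" and s2: "simple_function M J2" and s3: "simple_function M J3"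
    and d1: "detm M J1 (\<lambda>\<omega>. (X \<omega>, Y \<omega>, Z \<omega>))" "detm M (\<lambda>\<omega>. (X \<omega>, Y \<omega>, Z \<omega>)) J1"
    and d2: "detm M J2 (\<lambda>\<omega>. (X \<omega>, Z \<omega>))" "detm M (\<lambda>\<omega>. (X \<omega>, Z \<omega>)) J2"
    and d3: "detm M J3 (\<lambda>\<omega>. (Y \<omega>, Z \<omega>))" "detm M (\<lambda>\<omega>. (Y \<omega>, Z \<omega>)) J3"
  shows "ent M b J1 + ent M b Z \<le> ent M b J2 + ent M b J3"
proof -
  have "ent M b J1 = ent M b (\<lambda>\<omega>. (X \<omega>, Y \<omega>, Z \<omega>))" by (rule ent_eq[OF s1 _ d1]) (use X Y Z in simp)
  moreover have "ent M b J2 = ent M b (\<lambda>\<omega>. (X \<omega>, Z \<omega>))" by (rule ent_eq[OF s2 _ d2]) (use X Y Z in simp)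
  moreover have "ent M b J3 = ent M b (\<lambda>\<omega>. (Y \<omega>, Z \<omega>))" by (rule ent_eq[OF s3 _ d3]) (use X Y Z in simp)
  ultimately show ?thesis using submod[OF X Y Z] by simp
qed

lemma cmi_mono:
  assumes X: "simple_function M X" and Y: "simple_function M Y" and Z: "simple_function M Z"
    and d: "detm M Y Y'"
  shows "cmi M b X Y' Z \<le> cmi M b X Y Z"
proof -
  have Y': "simple_function M Y'" by (rule simple_det[OF Y d])
  have sm: "ent M b (\<lambda>\<omega>. (X \<omega>, Y \<omega>, Y' \<omega>, Z \<omega>)) + ent M b (\<lambda>\<omega>. (Y' \<omega>, Z \<omega>))
     \<le> ent M b (\<lambda>\<omega>. (X \<omega>, Y' \<omega>, Z \<omega>)) + ent M b (\<lambda>\<omega>. (Y \<omega>, Y' \<omega>, Z \<omega>))"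
    using submod[OF X Y simple_function_Pair[OF Y' Z]] by simp
  have d'[rule_format]: "\<forall>\<omega> \<omega>'. \<omega> \<in> space M \<longrightarrow> \<omega>' \<in> space M \<longrightarrow> Y \<omega> = Y \<omega>' \<longrightarrow> Y' \<omega> = Y' \<omega>'"
    using d unfolding detm_def by blast
  moreover have "ent M b (\<lambda>\<omega>. (X \<omega>, Y \<omega>, Y' \<omega>, Z \<omega>)) = ent M b (\<lambda>\<omega>. (X \<omega>, Y \<omega>, Z \<omega>))"
    by (rule ent_eq) (auto simp: X Y Y' Z detm_def intro: d')
  moreover have "ent M b (\<lambda>\<omega>. (Y \<omega>, Y' \<omega>, Z \<omega>)) = ent M b (\<lambda>\<omega>. (Y \<omega>, Z \<omega>))"
    by (rule ent_eq) (auto simp: X Y Y' Z detm_def intro: d')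
  ultimately show ?thesis using sm cmi_eq[OF X Y Z] cmi_eq[OF X Y' Z] by linarith
qed

end



theorem lemma2:
  fixes M :: "'a measure" and N K L m :: nat and C :: "'c set"
    and W :: "nat \<Rightarrow> 'a \<Rightarrow> 'f::{field,finite} list" and RS :: "'c \<Rightarrow> 'a \<Rightarrow> 'r"
    and F :: "'a \<Rightarrow> 'g" and Q :: "nat \<Rightarrow> nat \<Rightarrow> 'c set \<Rightarrow> 'a \<Rightarrow> 'q"
    and A :: "nat \<Rightarrow> nat \<Rightarrow> 'c set \<Rightarrow> 'a \<Rightarrow> 'ans"
    and k :: nat and U U' :: "'c set"
  assumes valid: "valid_scheme M N K L C m W RS F Q A"
    and N: "N \<ge> 1" and K: "K \<ge> 2" and k: "k \<in> {2..K}"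
    and U: "U \<in> adm C m"
    and U': "U' \<in> adm C m"
    and U'_ent: "ent M (real CARD('f)) (Rpart RS U') = ent M (real CARD('f)) (Rpart RS U)"
    and U'_priv: "\<forall>n\<in>{1..N}.
        same_distr M (\<lambda>\<omega>. (Q n (k - 1) U \<omega>, A n (k - 1) U \<omega>, Wseg W 1 K \<omega>, Rpart RS C \<omega>))
                     (\<lambda>\<omega>. (Q n k U' \<omega>, A n k U' \<omega>, Wseg W 1 K \<omega>, Rpart RS C \<omega>))"
  shows "cmi M (real CARD('f)) (Wseg W k K)
            (\<lambda>\<omega>. (allN Q N (k - 1) U \<omega>, allN A N (k - 1) U \<omega>, Rpart RS C \<omega>)) (Wseg W 1 (k - 1))
         \<ge> 1 / real N * cmi M (real CARD('f)) (Wseg W (k + 1) K)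
               (\<lambda>\<omega>. (allN Q N k U' \<omega>, allN A N k U' \<omega>, Rpart RS C \<omega>)) (Wseg W 1 k)
           + real L / real N"
proof -
  define b where "b = real CARD('f)"
  have card2: "2 \<le> CARD('f)"
  proof -
    have "card {0::'f, 1} = 2" by simp
    moreover have "card {0::'f,1} \<le> CARD('f)" by (rule card_mono) auto
    ultimately show ?thesis by simp
  qed
  have b1: "1 < b" unfolding b_def using card2 by simp
  have ps: "prob_space M" using valid unfolding valid_scheme_def Let_def by blast
  interpret information_space M b using ps b1 by (simp add: information_space_def information_space_axioms_def)
  have finC: "finite C" and sW: "\<And>j. simple_function M (W j)" and sRS: "\<And>c. simple_function M (RS c)"
    and sF: "simple_function M F" and sQ: "\<And>n k U. simple_function M (Q n k U)"
    and sA: "\<And>n k U. simple_function M (A n k U)"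
    using valid unfolding valid_scheme_def Let_def by (elim conjE; blast)+
  have unif: "\<forall>ws. length ws = K \<and> (\<forall>w\<in>set ws. length w = L) \<longrightarrow>
        measure M {\<omega> \<in> space M. Wseg W 1 K \<omega> = ws} = 1 / b ^ (K * L)"
    using valid unfolding valid_scheme_def Let_def b_def by (elim conjE; blast)
  have allk: "\<forall>k\<in>{1..K}. \<forall>U\<in>adm C m.
       mi M b (Wseg W 1 K) (\<lambda>\<omega>. (F \<omega>, Rpart RS C \<omega>, Rpart RS U \<omega>)) = 0 \<and>
       cent M b (allN Q N k U) F = 0 \<and>
       (\<forall>n\<in>{1..N}. cent M b (A n k U) (\<lambda>\<omega>. (Q n k U \<omega>, Wseg W 1 K \<omega>, Rpart RS C \<omega>)) = 0) \<and>
       cent M b (W k) (\<lambda>\<omega>. (F \<omega>, allN A N k U \<omega>, Rpart RS U \<omega>)) = 0"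
    using valid unfolding valid_scheme_def Let_def b_def by (elim conjE) fast
  have k1: "k \<in> {1..K}" using k by auto
  from allk k1 U' have
    C1: "mi M b (Wseg W 1 K) (\<lambda>\<omega>. (F \<omega>, Rpart RS C \<omega>, Rpart RS U' \<omega>)) = 0" and
    C3: "cent M b (allN Q N k U') F = 0" and
    C4: "\<forall>n\<in>{1..N}. cent M b (A n k U') (\<lambda>\<omega>. (Q n k U' \<omega>, Wseg W 1 K \<omega>, Rpart RS C \<omega>)) = 0" and
    C5: "cent M b (W k) (\<lambda>\<omega>. (F \<omega>, allN A N k U' \<omega>, Rpart RS U' \<omega>)) = 0"
    by blast+

  have k2: "2 \<le> k" "k \<le> K" using k by auto
  have U'C: "U' \<subseteq> C" using U' unfolding adm_def by auto
  have Npos: "real N > 0" using N by simp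
  define Wl where "Wl = Wseg W 1 K"
  define P where "P = Wseg W 1 (k-1)"
  define X where "X = W k"
  define Y where "Y = Wseg W (k+1) K"
  define WkK where "WkK = Wseg W k K"
  define W1k where "W1k = Wseg W 1 k"
  define R where "R = Rpart RS C"
  define RU where "RU = Rpart RS U'"
  define Qa where "Qa = allN Q N k U'"
  define Aa where "Aa = allN A N k U'"
  define Qn where "Qn n = Q n k U'" for n
  define An where "An n = A n k U'" for n
  define Qb where "Qb = allN Q N (k-1) U"
  define Ab where "Ab = allN A N (k-1) U"
  have sWseg: "simple_function M (Wseg W a c)" for a c
  proof -
    have "Wseg W a c = (\<lambda>\<omega>. map (\<lambda>j. W j \<omega>) [a..<Suc c])" by (simp add: Wseg_def fun_eq_iff)
    moreover have "simple_function M (\<lambda>\<omega>. map (\<lambda>j. W j \<omega>) [a..<Suc c])" by (rule simple_map) (rule sW)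
    ultimately show ?thesis by (simp only:)
  qed
  have sallQ: "simple_function M (allN Q N kk UU)" for kk UU
  proof -
    have "allN Q N kk UU = (\<lambda>\<omega>. map (\<lambda>n. Q n kk UU \<omega>) [1..<Suc N])" by (simp add: allN_def fun_eq_iff)
    moreover have "simple_function M (\<lambda>\<omega>. map (\<lambda>n. Q n kk UU \<omega>) [1..<Suc N])" by (rule simple_map) (rule sQ)
    ultimately show ?thesis by (simp only:)
  qed
  have sallA: "simple_function M (allN A N kk UU)" for kk UU
  proof -
    have "allN A N kk UU = (\<lambda>\<omega>. map (\<lambda>n. A n kk UU \<omega>) [1..<Suc N])" by (simp add: allN_def fun_eq_iff)
    moreover have "simple_function M (\<lambda>\<omega>. map (\<lambda>n. A n kk UU \<omega>) [1..<Suc N])" by (rule simple_map) (rule sA)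
    ultimately show ?thesis by (simp only:)
  qed
  have sR: "simple_function M R" unfolding R_def by (rule simple_Rpart[OF finC sRS])
  have sRU: "simple_function M RU" unfolding RU_def by (rule simple_Rpart[OF finite_subset[OF U'C finC] sRS])
  note sfs = sWseg sallQ sallA sR sRU sF sQ sA sW
  have sWl: "simple_function M Wl" and sP: "simple_function M P" and sX: "simple_function M X"
    and sY: "simple_function M Y" and sWkK: "simple_function M WkK" and sW1k: "simple_function M W1k"
    and sQa: "simple_function M Qa" and sAa: "simple_function M Aa" and sQn: "simple_function M (Qn n)"
    and sAn: "simple_function M (An n)" and sQb: "simple_function M Qb" and sAb: "simple_function M Ab" for n
    unfolding Wl_def P_def X_def Y_def WkK_def W1k_def Qa_def Aa_def Qn_def An_def Qb_def Ab_def
    using sfs by auto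
  note sf = sWl sP sX sY sWkK sW1k sQa sAa sQn sAn sQb sAb sR sRU sF
  have us: "[1..<Suc K] = [1..<k] @ k # [Suc k..<Suc K]" by (rule upt_split3) (use k2 in auto)
  have hWl: "Wl \<omega> = P \<omega> @ X \<omega> # Y \<omega>" for \<omega>
  proof -
    have "Suc (k-1) = k" using k2 by simp
    then show ?thesis unfolding Wl_def P_def X_def Y_def Wseg_def us by (simp del: upt_Suc)
  qed
  have hWkK: "WkK \<omega> = X \<omega> # Y \<omega>" for \<omega>
    unfolding WkK_def X_def Y_def Wseg_def using k2 by (simp add: upt_conv_Cons del: upt_Suc)
  have hW1k: "W1k \<omega> = P \<omega> @ [X \<omega>]" for \<omega>
  proof -
    have "Suc (k-1) = k" using k2 by simp
    then show ?thesis unfolding W1k_def X_def P_def Wseg_def using k2 by (simp del: upt_Suc add: upt_Suc_append)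
  qed
  have lenP: "length (P \<omega>) = k - 1" for \<omega> unfolding P_def Wseg_def by (simp del: upt_Suc)
  have lenY: "length (Y \<omega>) = K - k" for \<omega> unfolding Y_def Wseg_def by (simp del: upt_Suc)
  have hQa: "Qa \<omega> = map (\<lambda>n. Qn n \<omega>) [1..<Suc N]" for \<omega> unfolding Qa_def Qn_def allN_def by simp
  have hAa: "Aa \<omega> = map (\<lambda>n. An n \<omega>) [1..<Suc N]" for \<omega> unfolding Aa_def An_def allN_def by simp
  have hQb: "Qb \<omega> = map (\<lambda>n. Q n (k-1) U \<omega>) [1..<Suc N]" for \<omega> unfolding Qb_def allN_def by simp
  have hAb: "Ab \<omega> = map (\<lambda>n. A n (k-1) U \<omega>) [1..<Suc N]" for \<omega> unfolding Ab_def allN_def by simp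
  have hRU: "RU \<omega> = restrict (R \<omega>) U'" for \<omega>
    unfolding RU_def R_def Rpart_def using U'C by (auto simp: restrict_def fun_eq_iff)
  have hPt: "P \<omega> = take (k-1) (Wl \<omega>)" for \<omega> by (simp add: hWl lenP)
  have hWkKd: "WkK \<omega> = drop (k-1) (Wl \<omega>)" for \<omega> by (simp add: hWl lenP hWkK)
  let ?H = "ent M b"
  note rel = hWl hWkK hW1k lenP lenY hQa hAa hQb hAb hRU append_eq_append_conv
  have hQnn: "Qn n \<omega> = Qa \<omega> ! (n - 1)" if "n \<in> {1..N}" for n \<omega>
  proof -
    have "n - 1 < N" "Suc (n - 1) = n" using that by auto
    then show ?thesis unfolding hQa by (simp del: upt_Suc)
  qed
  have hAnn: "An n \<omega> = Aa \<omega> ! (n - 1)" if "n \<in> {1..N}" for n \<omega>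
  proof -
    have "n - 1 < N" "Suc (n - 1) = n" using that by auto
    then show ?thesis unfolding hAa by (simp del: upt_Suc)
  qed
  have hQbn: "Q n (k-1) U \<omega> = Qb \<omega> ! (n - 1)" if "n \<in> {1..N}" for n \<omega>
  proof -
    have "n - 1 < N" "Suc (n - 1) = n" using that by auto
    then show ?thesis unfolding hQb by (simp del: upt_Suc)
  qed
  have hAbn: "A n (k-1) U \<omega> = Ab \<omega> ! (n - 1)" if "n \<in> {1..N}" for n \<omega>
  proof -
    have "n - 1 < N" "Suc (n - 1) = n" using that by auto
    then show ?thesis unfolding hAb by (simp del: upt_Suc)
  qed
  note reln = hWl hWkK hW1k lenP lenY hRU append_eq_append_conv hQnn hAnn hQbn hAbn hQbn[simplified] hAbn[simplified]
  have "mi M b Wl (\<lambda>\<omega>. (F \<omega>, R \<omega>, RU \<omega>)) = 0" using C1 unfolding Wl_def R_def RU_def .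
  then have a1a: "?H Wl + ?H (\<lambda>\<omega>. (F \<omega>, R \<omega>, RU \<omega>)) - ?H (\<lambda>\<omega>. (Wl \<omega>, F \<omega>, R \<omega>, RU \<omega>)) = 0"
    using mi_eq[of Wl "\<lambda>\<omega>. (F \<omega>, R \<omega>, RU \<omega>)"] sf by simp
  have a1b: "?H (\<lambda>\<omega>. (Wl \<omega>, F \<omega>, R \<omega>, RU \<omega>)) = ?H (\<lambda>\<omega>. (Wl \<omega>, F \<omega>, R \<omega>))" by (rule ent_eq) (auto simp: sf, auto simp: detm_def rel)
  have a1c: "?H (\<lambda>\<omega>. (F \<omega>, R \<omega>, RU \<omega>)) = ?H (\<lambda>\<omega>. (F \<omega>, R \<omega>))" by (rule ent_eq) (auto simp: sf, auto simp: detm_def rel)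
  have a1: "?H (\<lambda>\<omega>. (Wl \<omega>, F \<omega>, R \<omega>)) = ?H Wl + ?H (\<lambda>\<omega>. (F \<omega>, R \<omega>))" using a1a a1b a1c by linarith
  have "cent M b Qa F = 0" using C3 unfolding Qa_def .
  then have C3': "?H (\<lambda>\<omega>. (Qa \<omega>, F \<omega>)) = ?H F" using cent_eq[of Qa F] sf by simp
  have a2s: "?H (\<lambda>\<omega>. (Qa \<omega>, R \<omega>, F \<omega>)) + ?H F \<le> ?H (\<lambda>\<omega>. (Qa \<omega>, F \<omega>)) + ?H (\<lambda>\<omega>. (R \<omega>, F \<omega>))"
    by (rule submod_gen[of "Qa" "R" "F"]) (auto simp: sf, auto simp: detm_def rel)
  have a2e1: "?H (\<lambda>\<omega>. (F \<omega>, Qa \<omega>, R \<omega>)) = ?H (\<lambda>\<omega>. (Qa \<omega>, R \<omega>, F \<omega>))" by (rule ent_eq) (auto simp: sf, auto simp: detm_def rel)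
  have a2e2: "?H (\<lambda>\<omega>. (R \<omega>, F \<omega>)) = ?H (\<lambda>\<omega>. (F \<omega>, R \<omega>))" by (rule ent_eq) (auto simp: sf, auto simp: detm_def rel)
  have a2: "?H (\<lambda>\<omega>. (F \<omega>, Qa \<omega>, R \<omega>)) \<le> ?H (\<lambda>\<omega>. (F \<omega>, R \<omega>))" using a2s a2e1 a2e2 C3' by linarith
  have a3s: "?H (\<lambda>\<omega>. (Wl \<omega>, F \<omega>, Qa \<omega>, R \<omega>)) + ?H (\<lambda>\<omega>. (Qa \<omega>, R \<omega>)) \<le> ?H (\<lambda>\<omega>. (Wl \<omega>, Qa \<omega>, R \<omega>)) + ?H (\<lambda>\<omega>. (F \<omega>, Qa \<omega>, R \<omega>))"
    by (rule submod_gen[of "Wl" "F" "\<lambda>\<omega>. (Qa \<omega>, R \<omega>)"]) (auto simp: sf, auto simp: detm_def rel)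
  have a3m: "?H (\<lambda>\<omega>. (Wl \<omega>, F \<omega>, R \<omega>)) \<le> ?H (\<lambda>\<omega>. (Wl \<omega>, F \<omega>, Qa \<omega>, R \<omega>))" by (rule ent_mono) (auto simp: sf, auto simp: detm_def rel)
  have a3: "?H Wl + ?H (\<lambda>\<omega>. (Qa \<omega>, R \<omega>)) \<le> ?H (\<lambda>\<omega>. (Wl \<omega>, Qa \<omega>, R \<omega>))" using a3s a3m a1 a2 by linarith
  have a3n: "?H Wl + ?H (\<lambda>\<omega>. (Qn n \<omega>, R \<omega>)) \<le> ?H (\<lambda>\<omega>. (Wl \<omega>, Qn n \<omega>, R \<omega>))" if hn: "n \<in> {1..N}" for n
  proof -
    have s: "?H (\<lambda>\<omega>. (Wl \<omega>, Qa \<omega>, Qn n \<omega>, R \<omega>)) + ?H (\<lambda>\<omega>. (Qn n \<omega>, R \<omega>)) \<le> ?H (\<lambda>\<omega>. (Wl \<omega>, Qn n \<omega>, R \<omega>)) + ?H (\<lambda>\<omega>. (Qa \<omega>, Qn n \<omega>, R \<omega>))"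
      by (rule submod_gen[of "Wl" "Qa" "\<lambda>\<omega>. (Qn n \<omega>, R \<omega>)"]) (auto simp: sf, auto simp: detm_def reln hn hn[simplified])
    have e1: "?H (\<lambda>\<omega>. (Wl \<omega>, Qa \<omega>, Qn n \<omega>, R \<omega>)) = ?H (\<lambda>\<omega>. (Wl \<omega>, Qa \<omega>, R \<omega>))" by (rule ent_eq) (auto simp: sf, auto simp: detm_def reln hn hn[simplified])
    have e2: "?H (\<lambda>\<omega>. (Qa \<omega>, Qn n \<omega>, R \<omega>)) = ?H (\<lambda>\<omega>. (Qa \<omega>, R \<omega>))" by (rule ent_eq) (auto simp: sf, auto simp: detm_def reln hn hn[simplified])
    show ?thesis using s e1 e2 a3 by linarith
  qed
  have a4n: "?H P + ?H (\<lambda>\<omega>. (Qn n \<omega>, R \<omega>)) \<le> ?H (\<lambda>\<omega>. (Qn n \<omega>, R \<omega>, P \<omega>))" if hn: "n \<in> {1..N}" for n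
  proof -
    have s: "?H (\<lambda>\<omega>. (Wl \<omega>, (Qn n \<omega>, R \<omega>), P \<omega>)) + ?H P \<le> ?H (\<lambda>\<omega>. (Wl \<omega>, P \<omega>)) + ?H (\<lambda>\<omega>. ((Qn n \<omega>, R \<omega>), P \<omega>))"
      by (rule submod_gen[of "Wl" "\<lambda>\<omega>. (Qn n \<omega>, R \<omega>)" "P"]) (auto simp: sf, auto simp: detm_def reln hn hn[simplified])
    have e1: "?H (\<lambda>\<omega>. (Wl \<omega>, (Qn n \<omega>, R \<omega>), P \<omega>)) = ?H (\<lambda>\<omega>. (Wl \<omega>, Qn n \<omega>, R \<omega>))" by (rule ent_eq) (auto simp: sf, auto simp: detm_def reln hn hn[simplified])
    have e2: "?H (\<lambda>\<omega>. (Wl \<omega>, P \<omega>)) = ?H Wl" by (rule ent_eq) (auto simp: sf, auto simp: detm_def reln hn hn[simplified])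
    have e3: "?H (\<lambda>\<omega>. ((Qn n \<omega>, R \<omega>), P \<omega>)) = ?H (\<lambda>\<omega>. (Qn n \<omega>, R \<omega>, P \<omega>))" by (rule ent_eq) (auto simp: sf, auto simp: detm_def reln hn hn[simplified])
    show ?thesis using s e1 e2 e3 a3n[OF hn] by linarith
  qed
  have a4: "?H P + ?H (\<lambda>\<omega>. (Qa \<omega>, R \<omega>)) \<le> ?H (\<lambda>\<omega>. (Qa \<omega>, R \<omega>, P \<omega>))"
  proof -
    have s: "?H (\<lambda>\<omega>. (Wl \<omega>, (Qa \<omega>, R \<omega>), P \<omega>)) + ?H P \<le> ?H (\<lambda>\<omega>. (Wl \<omega>, P \<omega>)) + ?H (\<lambda>\<omega>. ((Qa \<omega>, R \<omega>), P \<omega>))"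
      by (rule submod_gen[of "Wl" "\<lambda>\<omega>. (Qa \<omega>, R \<omega>)" "P"]) (auto simp: sf, auto simp: detm_def rel)
    have e1: "?H (\<lambda>\<omega>. (Wl \<omega>, (Qa \<omega>, R \<omega>), P \<omega>)) = ?H (\<lambda>\<omega>. (Wl \<omega>, Qa \<omega>, R \<omega>))" by (rule ent_eq) (auto simp: sf, auto simp: detm_def rel)
    have e2: "?H (\<lambda>\<omega>. (Wl \<omega>, P \<omega>)) = ?H Wl" by (rule ent_eq) (auto simp: sf, auto simp: detm_def rel)
    have e3: "?H (\<lambda>\<omega>. ((Qa \<omega>, R \<omega>), P \<omega>)) = ?H (\<lambda>\<omega>. (Qa \<omega>, R \<omega>, P \<omega>))" by (rule ent_eq) (auto simp: sf, auto simp: detm_def rel)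
    show ?thesis using s e1 e2 e3 a3 by linarith
  qed
  have a5n: "?H (\<lambda>\<omega>. (An n \<omega>, Qa \<omega>, Wl \<omega>, R \<omega>)) \<le> ?H (\<lambda>\<omega>. (Qa \<omega>, Wl \<omega>, R \<omega>))" if hn: "n \<in> {1..N}" for n
  proof -
    have s: "?H (\<lambda>\<omega>. (An n \<omega>, Qa \<omega>, Qn n \<omega>, Wl \<omega>, R \<omega>)) + ?H (\<lambda>\<omega>. (Qn n \<omega>, Wl \<omega>, R \<omega>)) \<le> ?H (\<lambda>\<omega>. (An n \<omega>, Qn n \<omega>, Wl \<omega>, R \<omega>)) + ?H (\<lambda>\<omega>. (Qa \<omega>, Qn n \<omega>, Wl \<omega>, R \<omega>))"
      by (rule submod_gen[of "An n" "Qa" "\<lambda>\<omega>. (Qn n \<omega>, Wl \<omega>, R \<omega>)"]) (auto simp: sf, auto simp: detm_def reln hn hn[simplified])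
    have "cent M b (An n) (\<lambda>\<omega>. (Qn n \<omega>, Wl \<omega>, R \<omega>)) = 0" using C4 hn unfolding An_def Qn_def Wl_def R_def by blast
    then have c4: "?H (\<lambda>\<omega>. (An n \<omega>, Qn n \<omega>, Wl \<omega>, R \<omega>)) = ?H (\<lambda>\<omega>. (Qn n \<omega>, Wl \<omega>, R \<omega>))"
      using cent_eq[of "An n" "\<lambda>\<omega>. (Qn n \<omega>, Wl \<omega>, R \<omega>)"] sf by simp
    have e1: "?H (\<lambda>\<omega>. (An n \<omega>, Qa \<omega>, Qn n \<omega>, Wl \<omega>, R \<omega>)) = ?H (\<lambda>\<omega>. (An n \<omega>, Qa \<omega>, Wl \<omega>, R \<omega>))" by (rule ent_eq) (auto simp: sf, auto simp: detm_def reln hn hn[simplified])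
    have e2: "?H (\<lambda>\<omega>. (Qa \<omega>, Qn n \<omega>, Wl \<omega>, R \<omega>)) = ?H (\<lambda>\<omega>. (Qa \<omega>, Wl \<omega>, R \<omega>))" by (rule ent_eq) (auto simp: sf, auto simp: detm_def reln hn hn[simplified])
    show ?thesis using s c4 e1 e2 by linarith
  qed
  have Aa_eq: "Aa = (\<lambda>\<omega>. map (\<lambda> n. An n \<omega>) [1..<Suc N])" using hAa by (simp add: fun_eq_iff)
  have a5: "?H (\<lambda>\<omega>. (Aa \<omega>, Qa \<omega>, Wl \<omega>, R \<omega>)) \<le> ?H (\<lambda>\<omega>. (Qa \<omega>, Wl \<omega>, R \<omega>))"
  proof -
    have "?H (\<lambda>\<omega>. (map (\<lambda> n. An n \<omega>) [1..<Suc N], Qa \<omega>, Wl \<omega>, R \<omega>)) - ?H (\<lambda>\<omega>. (Qa \<omega>, Wl \<omega>, R \<omega>))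
       \<le> (\<Sum>n\<in>{1..N}. ?H (\<lambda>\<omega>. (An n \<omega>, Qa \<omega>, Wl \<omega>, R \<omega>)) - ?H (\<lambda>\<omega>. (Qa \<omega>, Wl \<omega>, R \<omega>)))"
      by (rule subadd_list) (simp_all add: sf)
    also have "\<dots> \<le> 0" using a5n by (intro sum_nonpos) simp
    finally show ?thesis unfolding Aa_eq by simp
  qed
  have "cent M b X (\<lambda>\<omega>. (F \<omega>, Aa \<omega>, RU \<omega>)) = 0" using C5 unfolding X_def Aa_def RU_def .
  then have C5': "?H (\<lambda>\<omega>. (X \<omega>, F \<omega>, Aa \<omega>, RU \<omega>)) = ?H (\<lambda>\<omega>. (F \<omega>, Aa \<omega>, RU \<omega>))"
    using cent_eq[of X "\<lambda>\<omega>. (F \<omega>, Aa \<omega>, RU \<omega>)"] sf by simp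
  have d1s: "?H (\<lambda>\<omega>. (X \<omega>, (Qa \<omega>, R \<omega>), F \<omega>, Aa \<omega>, RU \<omega>)) + ?H (\<lambda>\<omega>. (F \<omega>, Aa \<omega>, RU \<omega>)) \<le> ?H (\<lambda>\<omega>. (X \<omega>, F \<omega>, Aa \<omega>, RU \<omega>)) + ?H (\<lambda>\<omega>. ((Qa \<omega>, R \<omega>), F \<omega>, Aa \<omega>, RU \<omega>))"
    by (rule submod_gen[of "X" "\<lambda>\<omega>. (Qa \<omega>, R \<omega>)" "\<lambda>\<omega>. (F \<omega>, Aa \<omega>, RU \<omega>)"]) (auto simp: sf, auto simp: detm_def rel)
  have d1e1: "?H (\<lambda>\<omega>. (X \<omega>, (Qa \<omega>, R \<omega>), F \<omega>, Aa \<omega>, RU \<omega>)) = ?H (\<lambda>\<omega>. (X \<omega>, F \<omega>, Aa \<omega>, Qa \<omega>, R \<omega>))" by (rule ent_eq) (auto simp: sf, auto simp: detm_def rel)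
  have d1e2: "?H (\<lambda>\<omega>. ((Qa \<omega>, R \<omega>), F \<omega>, Aa \<omega>, RU \<omega>)) = ?H (\<lambda>\<omega>. (F \<omega>, Aa \<omega>, Qa \<omega>, R \<omega>))" by (rule ent_eq) (auto simp: sf, auto simp: detm_def rel)
  have d1: "?H (\<lambda>\<omega>. (X \<omega>, F \<omega>, Aa \<omega>, Qa \<omega>, R \<omega>)) \<le> ?H (\<lambda>\<omega>. (F \<omega>, Aa \<omega>, Qa \<omega>, R \<omega>))"
    using d1s d1e1 d1e2 C5' by linarith
  have d2s: "?H (\<lambda>\<omega>. (Aa \<omega>, F \<omega>, Qa \<omega>, R \<omega>)) + ?H (\<lambda>\<omega>. (Qa \<omega>, R \<omega>)) \<le> ?H (\<lambda>\<omega>. (Aa \<omega>, Qa \<omega>, R \<omega>)) + ?H (\<lambda>\<omega>. (F \<omega>, Qa \<omega>, R \<omega>))"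
    by (rule submod_gen[of "Aa" "F" "\<lambda>\<omega>. (Qa \<omega>, R \<omega>)"]) (auto simp: sf, auto simp: detm_def rel)
  have d2e: "?H (\<lambda>\<omega>. (Aa \<omega>, F \<omega>, Qa \<omega>, R \<omega>)) = ?H (\<lambda>\<omega>. (F \<omega>, Aa \<omega>, Qa \<omega>, R \<omega>))" by (rule ent_eq) (auto simp: sf, auto simp: detm_def rel)
  have d3s: "?H (\<lambda>\<omega>. (Wl \<omega>, F \<omega>, Aa \<omega>, X \<omega>, Qa \<omega>, R \<omega>)) + ?H (\<lambda>\<omega>. (Aa \<omega>, X \<omega>, Qa \<omega>, R \<omega>)) \<le> ?H (\<lambda>\<omega>. (Wl \<omega>, Aa \<omega>, X \<omega>, Qa \<omega>, R \<omega>)) + ?H (\<lambda>\<omega>. (F \<omega>, Aa \<omega>, X \<omega>, Qa \<omega>, R \<omega>))"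
    by (rule submod_gen[of "Wl" "F" "\<lambda>\<omega>. (Aa \<omega>, X \<omega>, Qa \<omega>, R \<omega>)"]) (auto simp: sf, auto simp: detm_def rel)
  have d3m: "?H (\<lambda>\<omega>. (Wl \<omega>, F \<omega>, R \<omega>)) \<le> ?H (\<lambda>\<omega>. (Wl \<omega>, F \<omega>, Aa \<omega>, X \<omega>, Qa \<omega>, R \<omega>))" by (rule ent_mono) (auto simp: sf, auto simp: detm_def rel)
  have d3e1: "?H (\<lambda>\<omega>. (Wl \<omega>, Aa \<omega>, X \<omega>, Qa \<omega>, R \<omega>)) = ?H (\<lambda>\<omega>. (Aa \<omega>, Qa \<omega>, Wl \<omega>, R \<omega>))" by (rule ent_eq) (auto simp: sf, auto simp: detm_def rel)
  have d3e2: "?H (\<lambda>\<omega>. (F \<omega>, Aa \<omega>, X \<omega>, Qa \<omega>, R \<omega>)) = ?H (\<lambda>\<omega>. (X \<omega>, F \<omega>, Aa \<omega>, Qa \<omega>, R \<omega>))" by (rule ent_eq) (auto simp: sf, auto simp: detm_def rel)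
  have d4: "?H (\<lambda>\<omega>. (Wl \<omega>, Qa \<omega>, R \<omega>)) \<le> ?H Wl + ?H (\<lambda>\<omega>. (Qa \<omega>, R \<omega>))"
    using subadd[of Wl "\<lambda>\<omega>. (Qa \<omega>, R \<omega>)"] sf by simp
  have d4e: "?H (\<lambda>\<omega>. (Qa \<omega>, Wl \<omega>, R \<omega>)) = ?H (\<lambda>\<omega>. (Wl \<omega>, Qa \<omega>, R \<omega>))" by (rule ent_eq) (auto simp: sf, auto simp: detm_def rel)
  have dec: "?H (\<lambda>\<omega>. (Aa \<omega>, X \<omega>, Qa \<omega>, R \<omega>)) \<le> ?H (\<lambda>\<omega>. (Aa \<omega>, Qa \<omega>, R \<omega>))"
    using d3s d3m d3e1 d3e2 d4 d4e a5 a1 d1 d2s d2e a2 by linarith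
  have hu: "\<forall>ws\<in>Sg L K. measure M {\<omega> \<in> space M. Wl \<omega> = ws} = 1 / b ^ (K * L)"
    using unif unfolding Sg_def Wl_def by blast
  have u1: "?H Wl = real K * real L" by (rule ent_Wl[OF sWl b_def hu])
  have u2: "?H P \<le> real (k-1) * real L" by (rule ent_le_seg[OF sWl b_def hu sP]) (auto simp: Sg_def hWl lenP)
  have u3: "?H Y \<le> real (K-k) * real L" by (rule ent_le_seg[OF sWl b_def hu sY]) (auto simp: Sg_def hWl lenY)
  have u4: "?H Wl = ?H (\<lambda>\<omega>. ((P \<omega>, X \<omega>), Y \<omega>))" by (rule ent_eq) (auto simp: sf, auto simp: detm_def rel)
  have u5: "?H (\<lambda>\<omega>. ((P \<omega>, X \<omega>), Y \<omega>)) \<le> ?H (\<lambda>\<omega>. (P \<omega>, X \<omega>)) + ?H Y"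
    using subadd[of "\<lambda>\<omega>. (P \<omega>, X \<omega>)" Y] sf by simp
  have u6: "?H W1k = ?H (\<lambda>\<omega>. (P \<omega>, X \<omega>))" by (rule ent_eq) (auto simp: sf, auto simp: detm_def rel)
  have u2': "?H P \<le> real k * real L - real L" using u2 k2 by (simp add: of_nat_diff left_diff_distrib)
  have u3': "?H Y \<le> real K * real L - real k * real L" using u3 k2 by (simp add: of_nat_diff left_diff_distrib)
  have uni: "?H P + real L \<le> ?H W1k" using u1 u2' u3' u4 u5 u6 by linarith
  have In: "?H (\<lambda>\<omega>. (An n \<omega>, Qa \<omega>, R \<omega>, P \<omega>)) - ?H (\<lambda>\<omega>. (Qa \<omega>, R \<omega>, P \<omega>)) \<le> cmi M b WkK (\<lambda>\<omega>. (Qn n \<omega>, An n \<omega>, R \<omega>)) P" if hn: "n \<in> {1..N}" for n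
  proof -
    have c: "cmi M b WkK (\<lambda>\<omega>. (Qn n \<omega>, An n \<omega>, R \<omega>)) P = ?H (\<lambda>\<omega>. (WkK \<omega>, P \<omega>)) + ?H (\<lambda>\<omega>. ((Qn n \<omega>, An n \<omega>, R \<omega>), P \<omega>)) - ?H (\<lambda>\<omega>. (WkK \<omega>, (Qn n \<omega>, An n \<omega>, R \<omega>), P \<omega>)) - ?H P"
      using cmi_eq[of WkK "\<lambda>\<omega>. (Qn n \<omega>, An n \<omega>, R \<omega>)" P] sf by simp
    have sa: "?H (\<lambda>\<omega>. (WkK \<omega>, P \<omega>)) = ?H Wl" by (rule ent_eq) (auto simp: sf, auto simp: detm_def reln hn hn[simplified])
    have sb: "?H (\<lambda>\<omega>. (WkK \<omega>, (Qn n \<omega>, An n \<omega>, R \<omega>), P \<omega>)) = ?H (\<lambda>\<omega>. (An n \<omega>, Qn n \<omega>, Wl \<omega>, R \<omega>))" by (rule ent_eq) (auto simp: sf, auto simp: detm_def reln hn hn[simplified])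
    have "cent M b (An n) (\<lambda>\<omega>. (Qn n \<omega>, Wl \<omega>, R \<omega>)) = 0" using C4 hn unfolding An_def Qn_def Wl_def R_def by blast
    then have c4: "?H (\<lambda>\<omega>. (An n \<omega>, Qn n \<omega>, Wl \<omega>, R \<omega>)) = ?H (\<lambda>\<omega>. (Qn n \<omega>, Wl \<omega>, R \<omega>))"
      using cent_eq[of "An n" "\<lambda>\<omega>. (Qn n \<omega>, Wl \<omega>, R \<omega>)"] sf by simp
    have sb1: "?H (\<lambda>\<omega>. (Wl \<omega>, Qn n \<omega>, R \<omega>)) \<le> ?H Wl + ?H (\<lambda>\<omega>. (Qn n \<omega>, R \<omega>))"
      using subadd[of Wl "\<lambda>\<omega>. (Qn n \<omega>, R \<omega>)"] sf by simp
    have sb2: "?H (\<lambda>\<omega>. (Qn n \<omega>, Wl \<omega>, R \<omega>)) = ?H (\<lambda>\<omega>. (Wl \<omega>, Qn n \<omega>, R \<omega>))" by (rule ent_eq) (auto simp: sf, auto simp: detm_def reln hn hn[simplified])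
    have sc: "?H (\<lambda>\<omega>. (An n \<omega>, Qa \<omega>, Qn n \<omega>, R \<omega>, P \<omega>)) + ?H (\<lambda>\<omega>. (Qn n \<omega>, R \<omega>, P \<omega>)) \<le> ?H (\<lambda>\<omega>. (An n \<omega>, Qn n \<omega>, R \<omega>, P \<omega>)) + ?H (\<lambda>\<omega>. (Qa \<omega>, Qn n \<omega>, R \<omega>, P \<omega>))"
      by (rule submod_gen[of "An n" "Qa" "\<lambda>\<omega>. (Qn n \<omega>, R \<omega>, P \<omega>)"]) (auto simp: sf, auto simp: detm_def reln hn hn[simplified])
    have sce1: "?H (\<lambda>\<omega>. (An n \<omega>, Qa \<omega>, Qn n \<omega>, R \<omega>, P \<omega>)) = ?H (\<lambda>\<omega>. (An n \<omega>, Qa \<omega>, R \<omega>, P \<omega>))" by (rule ent_eq) (auto simp: sf, auto simp: detm_def reln hn hn[simplified])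
    have sce2: "?H (\<lambda>\<omega>. (An n \<omega>, Qn n \<omega>, R \<omega>, P \<omega>)) = ?H (\<lambda>\<omega>. ((Qn n \<omega>, An n \<omega>, R \<omega>), P \<omega>))" by (rule ent_eq) (auto simp: sf, auto simp: detm_def reln hn hn[simplified])
    have sce3: "?H (\<lambda>\<omega>. (Qa \<omega>, Qn n \<omega>, R \<omega>, P \<omega>)) = ?H (\<lambda>\<omega>. (Qa \<omega>, R \<omega>, P \<omega>))" by (rule ent_eq) (auto simp: sf, auto simp: detm_def reln hn hn[simplified])
    show ?thesis using c sa sb c4 sb1 sb2 sc sce1 sce2 sce3 a4n[OF hn] by linarith
  qed
  have sumI: "?H (\<lambda>\<omega>. ((Qa \<omega>, Aa \<omega>, R \<omega>), P \<omega>)) - ?H (\<lambda>\<omega>. (Qa \<omega>, R \<omega>)) - ?H P \<le> (\<Sum>n\<in>{1..N}. cmi M b WkK (\<lambda>\<omega>. (Qn n \<omega>, An n \<omega>, R \<omega>)) P)"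
  proof -
    have sl: "?H (\<lambda>\<omega>. (map (\<lambda> n. An n \<omega>) [1..<Suc N], Qa \<omega>, R \<omega>, P \<omega>)) - ?H (\<lambda>\<omega>. (Qa \<omega>, R \<omega>, P \<omega>)) \<le> (\<Sum>n\<in>{1..N}. ?H (\<lambda>\<omega>. (An n \<omega>, Qa \<omega>, R \<omega>, P \<omega>)) - ?H (\<lambda>\<omega>. (Qa \<omega>, R \<omega>, P \<omega>)))"
      by (rule subadd_list) (simp_all add: sf)
    have e0: "?H (\<lambda>\<omega>. (map (\<lambda> n. An n \<omega>) [1..<Suc N], Qa \<omega>, R \<omega>, P \<omega>)) = ?H (\<lambda>\<omega>. (Aa \<omega>, Qa \<omega>, R \<omega>, P \<omega>))"
      by (rule ent_cong) (simp add: hAa)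
    have e1: "?H (\<lambda>\<omega>. (Aa \<omega>, Qa \<omega>, R \<omega>, P \<omega>)) = ?H (\<lambda>\<omega>. ((Qa \<omega>, Aa \<omega>, R \<omega>), P \<omega>))" by (rule ent_eq) (auto simp: sf, auto simp: detm_def rel)
    have sa0: "?H (\<lambda>\<omega>. (Qa \<omega>, R \<omega>, P \<omega>)) = ?H (\<lambda>\<omega>. ((Qa \<omega>, R \<omega>), P \<omega>))" by (rule ent_eq) (auto simp: sf, auto simp: detm_def rel)
    have sa: "?H (\<lambda>\<omega>. (Qa \<omega>, R \<omega>, P \<omega>)) \<le> ?H (\<lambda>\<omega>. (Qa \<omega>, R \<omega>)) + ?H P"
      using subadd[of "\<lambda>\<omega>. (Qa \<omega>, R \<omega>)" P] sf sa0 by simp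
    have "(\<Sum>n\<in>{1..N}. ?H (\<lambda>\<omega>. (An n \<omega>, Qa \<omega>, R \<omega>, P \<omega>)) - ?H (\<lambda>\<omega>. (Qa \<omega>, R \<omega>, P \<omega>))) \<le> (\<Sum>n\<in>{1..N}. cmi M b WkK (\<lambda>\<omega>. (Qn n \<omega>, An n \<omega>, R \<omega>)) P)"
      using In by (intro sum_mono) simp
    then show ?thesis using sl e0 e1 sa by linarith
  qed
  have rc: "cmi M b Y (\<lambda>\<omega>. (Qa \<omega>, Aa \<omega>, R \<omega>)) W1k = ?H (\<lambda>\<omega>. (Y \<omega>, W1k \<omega>)) + ?H (\<lambda>\<omega>. ((Qa \<omega>, Aa \<omega>, R \<omega>), W1k \<omega>)) - ?H (\<lambda>\<omega>. (Y \<omega>, (Qa \<omega>, Aa \<omega>, R \<omega>), W1k \<omega>)) - ?H W1k"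
    using cmi_eq[of Y "\<lambda>\<omega>. (Qa \<omega>, Aa \<omega>, R \<omega>)" W1k] sf by simp
  have r1: "?H (\<lambda>\<omega>. (Y \<omega>, W1k \<omega>)) = ?H Wl" by (rule ent_eq) (auto simp: sf, auto simp: detm_def rel)
  have r2: "?H (\<lambda>\<omega>. (Wl \<omega>, Qa \<omega>, R \<omega>)) \<le> ?H (\<lambda>\<omega>. (Y \<omega>, (Qa \<omega>, Aa \<omega>, R \<omega>), W1k \<omega>))" by (rule ent_mono) (auto simp: sf, auto simp: detm_def rel)
  have r3s: "?H (\<lambda>\<omega>. (X \<omega>, P \<omega>, Qa \<omega>, Aa \<omega>, R \<omega>)) + ?H (\<lambda>\<omega>. (Qa \<omega>, Aa \<omega>, R \<omega>)) \<le> ?H (\<lambda>\<omega>. (X \<omega>, Qa \<omega>, Aa \<omega>, R \<omega>)) + ?H (\<lambda>\<omega>. (P \<omega>, Qa \<omega>, Aa \<omega>, R \<omega>))"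
    by (rule submod_gen[of "X" "P" "\<lambda>\<omega>. (Qa \<omega>, Aa \<omega>, R \<omega>)"]) (auto simp: sf, auto simp: detm_def rel)
  have r3e1: "?H (\<lambda>\<omega>. ((Qa \<omega>, Aa \<omega>, R \<omega>), W1k \<omega>)) = ?H (\<lambda>\<omega>. (X \<omega>, P \<omega>, Qa \<omega>, Aa \<omega>, R \<omega>))" by (rule ent_eq) (auto simp: sf, auto simp: detm_def rel)
  have r3e2: "?H (\<lambda>\<omega>. (X \<omega>, Qa \<omega>, Aa \<omega>, R \<omega>)) = ?H (\<lambda>\<omega>. (Aa \<omega>, X \<omega>, Qa \<omega>, R \<omega>))" by (rule ent_eq) (auto simp: sf, auto simp: detm_def rel)
  have r3e3: "?H (\<lambda>\<omega>. (Qa \<omega>, Aa \<omega>, R \<omega>)) = ?H (\<lambda>\<omega>. (Aa \<omega>, Qa \<omega>, R \<omega>))" by (rule ent_eq) (auto simp: sf, auto simp: detm_def rel)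
  have r3e4: "?H (\<lambda>\<omega>. (P \<omega>, Qa \<omega>, Aa \<omega>, R \<omega>)) = ?H (\<lambda>\<omega>. ((Qa \<omega>, Aa \<omega>, R \<omega>), P \<omega>))" by (rule ent_eq) (auto simp: sf, auto simp: detm_def rel)
  have RHSb: "cmi M b Y (\<lambda>\<omega>. (Qa \<omega>, Aa \<omega>, R \<omega>)) W1k + real L \<le> ?H (\<lambda>\<omega>. ((Qa \<omega>, Aa \<omega>, R \<omega>), P \<omega>)) - ?H (\<lambda>\<omega>. (Qa \<omega>, R \<omega>)) - ?H P"
    using rc r1 r2 r3s r3e1 r3e2 r3e3 r3e4 dec a3 uni by linarith

  have LH: "cmi M b WkK (\<lambda>\<omega>. (Qn n \<omega>, An n \<omega>, R \<omega>)) P \<le> cmi M b WkK (\<lambda>\<omega>. (Qb \<omega>, Ab \<omega>, R \<omega>)) P" if hn: "n \<in> {1..N}" for n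
  proof -
    have m: "cmi M b WkK (\<lambda>\<omega>. (Q n (k-1) U \<omega>, A n (k-1) U \<omega>, R \<omega>)) P \<le> cmi M b WkK (\<lambda>\<omega>. (Qb \<omega>, Ab \<omega>, R \<omega>)) P"
      by (rule cmi_mono) (auto simp: sf, auto simp: detm_def reln hn hn[simplified])
    have sdn: "same_distr M (\<lambda>\<omega>. (Q n (k-1) U \<omega>, A n (k-1) U \<omega>, Wl \<omega>, R \<omega>)) (\<lambda>\<omega>. (Qn n \<omega>, An n \<omega>, Wl \<omega>, R \<omega>))"
      using U'_priv hn unfolding Qn_def An_def Wl_def R_def by blast
    have sV1: "simple_function M (\<lambda>\<omega>. (Q n (k-1) U \<omega>, A n (k-1) U \<omega>, Wl \<omega>, R \<omega>))" using sf sQ sA by simp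
    have sV2: "simple_function M (\<lambda>\<omega>. (Qn n \<omega>, An n \<omega>, Wl \<omega>, R \<omega>))" using sf by simp
    have e1: "?H (\<lambda>\<omega>. ((Q n (k-1) U \<omega>, A n (k-1) U \<omega>, R \<omega>), P \<omega>)) = ?H (\<lambda>\<omega>. ((Qn n \<omega>, An n \<omega>, R \<omega>), P \<omega>))"
      by (rule ent_same_distr[OF sV1 sV2 sdn, where f="\<lambda>(q,a,w,r). ((q,a,r), take (k-1) w)"]) (simp_all add: hPt)
    have e2: "?H (\<lambda>\<omega>. (WkK \<omega>, (Q n (k-1) U \<omega>, A n (k-1) U \<omega>, R \<omega>), P \<omega>)) = ?H (\<lambda>\<omega>. (WkK \<omega>, (Qn n \<omega>, An n \<omega>, R \<omega>), P \<omega>))"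
      by (rule ent_same_distr[OF sV1 sV2 sdn, where f="\<lambda>(q,a,w,r). (drop (k-1) w, (q,a,r), take (k-1) w)"]) (simp_all add: hPt hWkKd)
    have c1: "cmi M b WkK (\<lambda>\<omega>. (Q n (k-1) U \<omega>, A n (k-1) U \<omega>, R \<omega>)) P = ?H (\<lambda>\<omega>. (WkK \<omega>, P \<omega>)) + ?H (\<lambda>\<omega>. ((Q n (k-1) U \<omega>, A n (k-1) U \<omega>, R \<omega>), P \<omega>)) - ?H (\<lambda>\<omega>. (WkK \<omega>, (Q n (k-1) U \<omega>, A n (k-1) U \<omega>, R \<omega>), P \<omega>)) - ?H P"
      using cmi_eq[of WkK "\<lambda>\<omega>. (Q n (k-1) U \<omega>, A n (k-1) U \<omega>, R \<omega>)" P] sf sQ sA by simp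
    have c2: "cmi M b WkK (\<lambda>\<omega>. (Qn n \<omega>, An n \<omega>, R \<omega>)) P = ?H (\<lambda>\<omega>. (WkK \<omega>, P \<omega>)) + ?H (\<lambda>\<omega>. ((Qn n \<omega>, An n \<omega>, R \<omega>), P \<omega>)) - ?H (\<lambda>\<omega>. (WkK \<omega>, (Qn n \<omega>, An n \<omega>, R \<omega>), P \<omega>)) - ?H P"
      using cmi_eq[of WkK "\<lambda>\<omega>. (Qn n \<omega>, An n \<omega>, R \<omega>)" P] sf by simp
    show ?thesis using m e1 e2 c1 c2 by linarith
  qed
  have sumL: "(\<Sum>n\<in>{1..N}. cmi M b WkK (\<lambda>\<omega>. (Qn n \<omega>, An n \<omega>, R \<omega>)) P) \<le> real N * cmi M b WkK (\<lambda>\<omega>. (Qb \<omega>, Ab \<omega>, R \<omega>)) P"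
  proof -
    have "(\<Sum>n\<in>{1..N}. cmi M b WkK (\<lambda>\<omega>. (Qn n \<omega>, An n \<omega>, R \<omega>)) P) \<le> (\<Sum>n\<in>{1..N}. cmi M b WkK (\<lambda>\<omega>. (Qb \<omega>, Ab \<omega>, R \<omega>)) P)"
      using LH by (intro sum_mono) simp
    then show ?thesis by simp
  qed
  have main: "cmi M b Y (\<lambda>\<omega>. (Qa \<omega>, Aa \<omega>, R \<omega>)) W1k + real L \<le> real N * cmi M b WkK (\<lambda>\<omega>. (Qb \<omega>, Ab \<omega>, R \<omega>)) P"
    using RHSb sumI sumL by linarith
  have fin: "1 / real N * cmi M b Y (\<lambda>\<omega>. (Qa \<omega>, Aa \<omega>, R \<omega>)) W1k + real L / real N \<le> cmi M b WkK (\<lambda>\<omega>. (Qb \<omega>, Ab \<omega>, R \<omega>)) P"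
  proof -
    have "1 / real N * cmi M b Y (\<lambda>\<omega>. (Qa \<omega>, Aa \<omega>, R \<omega>)) W1k + real L / real N = (cmi M b Y (\<lambda>\<omega>. (Qa \<omega>, Aa \<omega>, R \<omega>)) W1k + real L) / real N"
      by (simp add: add_divide_distrib)
    also have "\<dots> \<le> cmi M b WkK (\<lambda>\<omega>. (Qb \<omega>, Ab \<omega>, R \<omega>)) P"
      using main Npos by (simp add: divide_le_eq mult.commute)
    finally show ?thesis .
  qed
  then show ?thesis unfolding b_def WkK_def Qb_def Ab_def R_def P_def Y_def Qa_def Aa_def W1k_def by simp
qed

end
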